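(* The class of threshold graphs is degree sandwich monotone; that is, for every threshold graph $G$ and every set $F\subseteq E(G)$ such that $G-F$ is threshold, every degree-minimal edge $e$ in $F$ satisfies that $G-e$ is threshold.
   Context: A graph $G=(V,E)$ is threshold if there exist a labeling $\ell:V\to\mathbb{N}_0$ and $t\in\mathbb{N}_0$ such that $X\subseteq V$ is independent iff $\sum_{x\in X}\ell(x)\le t$. Given a graph $G$ and $F\subseteq E(G)$, an edge $e\in F$ is degree-minimal in $F$ if its endpoints can be named $u,v$ so that (i) $u$ has the smallest degree in $G$ among all vertices incident to an edge of $F$, and (ii) $v$ has the smallest degree in $G$ among all vertices $w$ with $uw\in F$. *)

theory Defs
  imports Main
begin

definition simple_graph :: "'a set \<Rightarrow> 'a set set \<Rightarrow> bool" where
  "simple_graph V E \<longleftrightarrow> finite V \<and> (\<forall>e\<in>E. e \<subseteq> V \<and> card e = 2)"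

definition independent :: "'a set set \<Rightarrow> 'a set \<Rightarrow> bool" where
  "independent E X \<longleftrightarrow> (\<forall>u\<in>X. \<forall>v\<in>X. {u, v} \<notin> E)"

definition threshold :: "'a set \<Rightarrow> 'a set set \<Rightarrow> bool" where
  "threshold V E \<longleftrightarrow> (\<exists>(l :: 'a \<Rightarrow> nat) (t :: nat).
      \<forall>X. X \<subseteq> V \<longrightarrow> (independent E X \<longleftrightarrow> sum l X \<le> t))"

definition degree :: "'a set set \<Rightarrow> 'a \<Rightarrow> nat" where
  "degree E v = card {e \<in> E. v \<in> e}"

definition degree_minimal :: "'a set set \<Rightarrow> 'a set set \<Rightarrow> 'a set \<Rightarrow> bool" where
  "degree_minimal E F e \<longleftrightarrow> e \<in> F \<and> (\<exists>u v. e = {u, v} \<and>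
      (\<forall>w. w \<in> \<Union>F \<longrightarrow> degree E u \<le> degree E w) \<and>
      (\<forall>w. {u, w} \<in> F \<longrightarrow> degree E v \<le> degree E w))"

end

theory Submission
  imports Defs
begin

definition nbr :: "'a set set \<Rightarrow> 'a \<Rightarrow> 'a set" where "nbr E p = {y. {p,y} \<in> E}"

definition ac4free :: "'a set \<Rightarrow> 'a set set \<Rightarrow> bool" where
 "ac4free V E \<longleftrightarrow> (\<forall>a\<in>V. \<forall>b\<in>V. \<forall>c\<in>V. \<forall>d\<in>V. distinct [a,b,c,d] \<longrightarrow> {a,b}\<in>E \<longrightarrow> {c,d}\<in>E \<longrightarrow> {a,d}\<in>E \<or> {b,c}\<in>E)"

lemma thr_ac4:
  assumes "threshold V E" "\<forall>x. {x} \<notin> E"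
  shows "ac4free V E"
  unfolding ac4free_def
proof (intro ballI impI)
  fix a b c d assume V: "a\<in>V" "b\<in>V" "c\<in>V" "d\<in>V" and dist: "distinct [a,b,c,d]"
    and ab: "{a,b}\<in>E" and cd: "{c,d}\<in>E"
  obtain l t where lt: "\<forall>X. X \<subseteq> V \<longrightarrow> (independent E X \<longleftrightarrow> sum l X \<le> (t::nat))"
    using assms(1) unfolding threshold_def by blast
  show "{a,d}\<in>E \<or> {b,c}\<in>E"
  proof (rule ccontr)
    assume h: "\<not> ?thesis"
    have "\<not> independent E {a,b}" using ab unfolding independent_def by blast
    hence 1: "l a + l b > t" using lt[rule_format, of "{a,b}"] V dist by auto
    have "\<not> independent E {c,d}" using cd unfolding independent_def by blast
    hence 2: "l c + l d > t" using lt[rule_format, of "{c,d}"] V dist by auto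
    have "independent E {a,d}" using h assms(2) unfolding independent_def by (auto simp: insert_commute)
    hence 3: "l a + l d \<le> t" using lt[rule_format, of "{a,d}"] V dist by auto
    have "independent E {b,c}" using h assms(2) unfolding independent_def by (auto simp: insert_commute)
    hence 4: "l b + l c \<le> t" using lt[rule_format, of "{b,c}"] V dist by auto
    from 1 2 3 4 show False by linarith
  qed
qed

lemma ac4_mono: "ac4free V E \<Longrightarrow> W \<subseteq> V \<Longrightarrow> ac4free W E"
  unfolding ac4free_def by blast

lemma nbr_sub: "simple_graph V E \<Longrightarrow> nbr E p \<subseteq> V"
  by (auto simp: simple_graph_def nbr_def)

lemma deg_nbr: assumes "simple_graph V E" shows "degree E p = card (nbr E p)"
proof -
  have "bij_betw (\<lambda>y. {p,y}) (nbr E p) {e\<in>E. p\<in>e}"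
  proof (rule bij_betwI')
    fix x y assume "x \<in> nbr E p" "y \<in> nbr E p"
    show "({p,x} = {p,y}) = (x = y)" by (metis doubleton_eq_iff)
  next
    fix x assume "x \<in> nbr E p" thus "{p,x} \<in> {e\<in>E. p\<in>e}" by (simp add: nbr_def)
  next
    fix e assume "e \<in> {e\<in>E. p\<in>e}"
    then have eE: "e\<in>E" "p\<in>e" by auto
    then obtain a b where "e={a,b}" "a\<noteq>b" using assms card_2_iff unfolding simple_graph_def by metis
    then show "\<exists>x\<in>nbr E p. e = {p,x}" using eE by (auto simp: nbr_def insert_commute)
  qed
  then have "card (nbr E p) = card {e\<in>E. p\<in>e}" by (rule bij_betw_same_card)
  thus ?thesis unfolding degree_def by simp
qed

lemma deg_less:
  assumes sg: "simple_graph V E" and ac: "ac4free V E" and pr: "{p,r}\<in>E" and qr: "{q,r}\<notin>E"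
    and qV: "q\<in>V" and rq: "r\<noteq>q"
  shows "degree E q < degree E p"
proof -
  have fin: "finite V" using sg simple_graph_def by auto
  have pV: "p\<in>V" "r\<in>V" using pr sg unfolding simple_graph_def by auto
  have noloop: "\<forall>x. {x}\<notin>E" using sg unfolding simple_graph_def by auto
  have pq: "p\<noteq>q" using pr qr by auto
  have pr': "p\<noteq>r" using pr noloop by auto
  have sub: "nbr E q - {p} \<subseteq> nbr E p - {q}"
  proof
    fix s assume s: "s \<in> nbr E q - {p}"
    show "s \<in> nbr E p - {q}"
    proof (rule ccontr)
      assume ns: "s \<notin> nbr E p - {q}"
      have qs: "{q,s}\<in>E" "s\<noteq>p" using s by (auto simp: nbr_def)
      have sq: "s\<noteq>q" using qs noloop by auto
      hence ps: "{p,s}\<notin>E" using ns by (auto simp: nbr_def)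
      have sV: "s\<in>V" using qs sg unfolding simple_graph_def by auto
      have rs: "r\<noteq>s" using qs qr by auto
      have "distinct [p,r,q,s]" using pq pr' rq qs(2) sq rs by auto
      then have "{p,s}\<in>E \<or> {r,q}\<in>E" using ac pV sV qV pr qs unfolding ac4free_def by blast
      then show False using ps qr by (auto simp: insert_commute)
    qed
  qed
  have r_in: "r \<in> nbr E p - {q}" "r \<notin> nbr E q" using pr qr rq by (auto simp: nbr_def insert_commute)
  have fq: "finite (nbr E q)" "finite (nbr E p)" using nbr_sub[OF sg] fin finite_subset by blast+
  have "nbr E q - {p} \<subset> nbr E p - {q}" using sub r_in by auto
  hence lt: "card (nbr E q - {p}) < card (nbr E p - {q})" using fq by (meson finite_Diff psubset_card_mono)
  have sym: "p \<in> nbr E q \<longleftrightarrow> q \<in> nbr E p" by (auto simp: nbr_def insert_commute)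
  have "card (nbr E q) < card (nbr E p)"
  proof (cases "q \<in> nbr E p")
    case True
    then have "p \<in> nbr E q" using sym by simp
    then have "card (nbr E q) \<ge> 1" using fq card_0_eq by fastforce
    then show ?thesis using lt True \<open>p \<in> nbr E q\<close> fq by (simp add: card_Diff_singleton)
  next
    case False
    then have "p \<notin> nbr E q" using sym by simp
    then show ?thesis using lt False by simp
  qed
  thus ?thesis using deg_nbr[OF sg] by simp
qed

lemma pos_label:
  assumes "finite V" "\<forall>X. X\<subseteq>V \<longrightarrow> (independent E X \<longleftrightarrow> sum l X \<le> (t::nat))"
  shows "\<exists>l' t'. (\<forall>y. l' y \<ge> (1::nat)) \<and> (\<forall>X. X\<subseteq>V \<longrightarrow> (independent E X \<longleftrightarrow> sum l' X \<le> (t'::nat)))"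
proof -
  define n where "n = card V"
  define l' where "l' y = (n+1) * l y + 1" for y
  have key: "sum l' X = (n+1) * sum l X + card X" for X
  proof -
    have "sum l' X = sum (\<lambda>y. (n+1)*l y) X + sum (\<lambda>y. 1) X" unfolding l'_def by (rule sum.distrib)
    also have "\<dots> = (n+1) * sum l X + card X" by (metis card_eq_sum sum_distrib_left)
    finally show ?thesis .
  qed
  have "\<forall>X. X\<subseteq>V \<longrightarrow> (independent E X \<longleftrightarrow> sum l' X \<le> (n+1)*t + n)"
  proof (intro allI impI)
    fix X assume X: "X\<subseteq>V"
    have cX: "card X \<le> n" using X assms(1) n_def card_mono by blast
    show "independent E X \<longleftrightarrow> sum l' X \<le> (n+1)*t + n"
    proof (cases "sum l X \<le> t")
      case True
      then have "(n+1)*sum l X \<le> (n+1)*t" by (rule mult_le_mono2)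
      then have "sum l' X \<le> (n+1)*t + n" using key cX by simp
      then show ?thesis using True assms(2) X by auto
    next
      case False
      then have "(n+1)*(t+1) \<le> (n+1)*sum l X" by (intro mult_le_mono2) simp
      then have "sum l' X > (n+1)*t + n" using key by (simp add: algebra_simps)
      then show ?thesis using False assms(2) X by auto
    qed
  qed
  moreover have "\<forall>y. l' y \<ge> 1" by (simp add: l'_def)
  ultimately show ?thesis by blast
qed

lemma exists_iso_dom:
  assumes fin: "finite V" and ne: "V \<noteq> {}" and nl: "\<forall>x. {x}\<notin>E" and ac: "ac4free V E"
  shows "\<exists>x\<in>V. (\<forall>y\<in>V. y\<noteq>x \<longrightarrow> {x,y}\<notin>E) \<or> (\<forall>y\<in>V. y\<noteq>x \<longrightarrow> {x,y}\<in>E)"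
proof (rule ccontr)
  assume H: "\<not> ?thesis"
  define N where "N x = nbr E x \<inter> V" for x
  have finN: "finite (N x)" for x using fin N_def by simp
  obtain x where xV: "x\<in>V" and xmax: "\<forall>z\<in>V. card (N z) \<le> card (N x)"
  proof -
    have "Max ((\<lambda>z. card (N z)) ` V) \<in> (\<lambda>z. card (N z)) ` V" using fin ne by simp
    then obtain x where "x\<in>V" "card (N x) = Max ((\<lambda>z. card (N z)) ` V)" by auto
    moreover have "\<forall>z\<in>V. card (N z) \<le> Max ((\<lambda>z. card (N z)) ` V)" using fin by simp
    ultimately show ?thesis using that by metis
  qed
  obtain y where yV: "y\<in>V" "y\<noteq>x" "{x,y}\<notin>E" using H xV by blast
  obtain z where zV: "z\<in>V" "z\<noteq>y" "{y,z}\<in>E" using H yV(1) by blast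
  have zx: "z\<noteq>x" using zV yV by (auto simp: insert_commute)
  have "\<exists>w. w\<in>V \<and> w\<noteq>z \<and> {x,w}\<in>E \<and> {w,z}\<notin>E"
  proof (rule ccontr)
    assume nw: "\<not> ?thesis"
    have sub: "N x - {z} \<subseteq> N z - {x} - {y}"
    proof
      fix w assume w: "w \<in> N x - {z}"
      then have wV: "w\<in>V" "{x,w}\<in>E" "w\<noteq>z" by (auto simp: N_def nbr_def)
      then have "{w,z}\<in>E" using nw by blast
      moreover have "w\<noteq>x" using wV nl by auto
      moreover have "w\<noteq>y" using wV yV by auto
      ultimately show "w \<in> N z - {x} - {y}" using wV by (auto simp: N_def nbr_def insert_commute)
    qed
    have yN: "y \<in> N z - {x}" using zV yV by (auto simp: N_def nbr_def insert_commute)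
    have sym: "z \<in> N x \<longleftrightarrow> x \<in> N z" using xV zV by (auto simp: N_def nbr_def insert_commute)
    have c1: "card (N x - {z}) \<le> card (N z - {x} - {y})" using sub finN by (meson card_mono finite_Diff)
    have c2: "card (N z - {x} - {y}) = card (N z - {x}) - 1" using yN finN by (simp add: card_Diff_singleton)
    have "N z - {x} \<noteq> {}" using yN by blast
    then have c3: "card (N z - {x}) \<ge> 1" using finN[of z] by (simp add: Suc_le_eq card_gt_0_iff)
    have "card (N x) < card (N z)"
    proof (cases "z \<in> N x")
      case True
      then have "x \<in> N z" using sym by simp
      then show ?thesis using True c1 c2 c3 finN by (simp add: card_Diff_singleton)
    next
      case False
      then have "x \<notin> N z" using sym by simp
      then show ?thesis using False c1 c2 c3 by simp
    qed
    then show False using xmax zV by auto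
  qed
  then obtain w where w: "w\<in>V" "w\<noteq>z" "{x,w}\<in>E" "{w,z}\<notin>E" by blast
  have dist: "distinct [x,w,z,y]" using w yV zV zx nl by (auto)
  have zy: "{z,y}\<in>E" using zV(3) by (simp add: insert_commute)
  have "{x,y}\<in>E \<or> {w,z}\<in>E"
    using ac[unfolded ac4free_def, rule_format, OF xV w(1) zV(1) yV(1) dist w(3) zy] .
  then show False using w yV by auto
qed

lemma ac4_thr:
  assumes "finite V" "\<forall>x. {x}\<notin>E" "ac4free V E" shows "threshold V E"
  using assms(1,3)
proof (induction V rule: finite_psubset_induct)
  case (psubset V)
  show ?case
  proof (cases "V = {}")
    case True
    show ?thesis unfolding threshold_def True
      by (rule exI[of _ "\<lambda>_. 0"], rule exI[of _ 0]) (auto simp: independent_def)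
  next
    case False
    obtain x where xV: "x\<in>V" and iso_dom: "(\<forall>y\<in>V. y\<noteq>x \<longrightarrow> {x,y}\<notin>E) \<or> (\<forall>y\<in>V. y\<noteq>x \<longrightarrow> {x,y}\<in>E)"
      using exists_iso_dom[OF psubset.hyps(1) False assms(2) psubset.prems] by blast
    have "threshold (V-{x}) E" using psubset.IH[of "V-{x}"] xV psubset.prems ac4_mono by blast
    then obtain l0 t0 where "\<forall>X. X \<subseteq> V-{x} \<longrightarrow> (independent E X \<longleftrightarrow> sum l0 X \<le> (t0::nat))"
      unfolding threshold_def by blast
    then obtain l t where lpos: "\<forall>y. l y \<ge> (1::nat)" and lt: "\<forall>X. X \<subseteq> V-{x} \<longrightarrow> (independent E X \<longleftrightarrow> sum l X \<le> (t::nat))"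
      using pos_label[of "V-{x}" E l0 t0] psubset.hyps(1) by blast
    from iso_dom show ?thesis
    proof
      assume iso: "\<forall>y\<in>V. y\<noteq>x \<longrightarrow> {x,y}\<notin>E"
      define L where "L = l(x:=0)"
      have "\<forall>X. X\<subseteq>V \<longrightarrow> (independent E X \<longleftrightarrow> sum L X \<le> t)"
      proof (intro allI impI)
        fix X assume X: "X\<subseteq>V"
        have finX: "finite X" using X psubset.hyps(1) finite_subset by blast
        have 1: "independent E X \<longleftrightarrow> independent E (X-{x})"
          unfolding independent_def
        proof
          assume "\<forall>u\<in>X. \<forall>v\<in>X. {u,v}\<notin>E" thus "\<forall>u\<in>X-{x}. \<forall>v\<in>X-{x}. {u,v}\<notin>E" by blast
        next
          assume A: "\<forall>u\<in>X-{x}. \<forall>v\<in>X-{x}. {u,v}\<notin>E"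
          show "\<forall>u\<in>X. \<forall>v\<in>X. {u,v}\<notin>E"
          proof (intro ballI)
            fix u v assume uv: "u\<in>X" "v\<in>X"
            show "{u,v}\<notin>E"
            proof (cases "u = x")
              case ux: True
              show ?thesis
              proof (cases "v = x")
                case True with ux show ?thesis using assms(2) by simp
              next
                case False then show ?thesis using iso ux uv X by auto
              qed
            next
              case ux: False
              show ?thesis
              proof (cases "v = x")
                case True
                then have "{u,v} = {x,u}" by (simp add: insert_commute)
                then show ?thesis using iso ux uv X by auto
              next
                case False then show ?thesis using A ux uv by blast
              qed
            qed
          qed
        qed
        have 3: "sum L (X-{x}) = sum l (X-{x})" by (rule sum.cong) (auto simp: L_def)
        have 2: "sum L X = sum l (X-{x})"
        proof (cases "x \<in> X")
          case True
          have "sum L X = L x + sum L (X - {x})" by (rule sum.remove[OF finX True])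
          also have "\<dots> = sum l (X-{x})" using 3 by (simp add: L_def)
          finally show ?thesis .
        next
          case False
          then have "X - {x} = X" by blast
          then show ?thesis using 3 by (simp only:)
        qed
        have "X - {x} \<subseteq> V - {x}" using X by blast
        from lt[rule_format, OF this] show "independent E X \<longleftrightarrow> sum L X \<le> t" using 1 2 by simp
      qed
      thus ?thesis unfolding threshold_def by blast
    next
      assume dom: "\<forall>y\<in>V. y\<noteq>x \<longrightarrow> {x,y}\<in>E"
      define L where "L = l(x:=t)"
      have "\<forall>X. X\<subseteq>V \<longrightarrow> (independent E X \<longleftrightarrow> sum L X \<le> t)"
      proof (intro allI impI)
        fix X assume X: "X\<subseteq>V"
        have finX: "finite X" using X psubset.hyps(1) finite_subset by blast
        have 3: "sum L (X-{x}) = sum l (X-{x})" by (rule sum.cong) (auto simp: L_def)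
        show "independent E X \<longleftrightarrow> sum L X \<le> t"
        proof (cases "x \<in> X")
          case False
          then have X': "X \<subseteq> V - {x}" "X - {x} = X" using X by blast+
          from lt[rule_format, OF X'(1)] show ?thesis using 3 X'(2) by simp
        next
          case True
          have "sum L X = L x + sum L (X - {x})" by (rule sum.remove[OF finX True])
          also have "\<dots> = t + sum l (X-{x})" using 3 by (simp add: L_def)
          finally have s: "sum L X = t + sum l (X-{x})" .
          show ?thesis
          proof (cases "X = {x}")
            case True
            then show ?thesis using assms(2) by (simp add: L_def independent_def)
          next
            case False
            then obtain y where y: "y\<in>X" "y\<noteq>x" using \<open>x\<in>X\<close> by blast
            then have "\<not> independent E X" using dom X \<open>x\<in>X\<close> unfolding independent_def by blast
            moreover have "l y \<le> sum l (X-{x})" using y finX by (intro member_le_sum) auto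
            ultimately show ?thesis using s lpos[rule_format, of y] by auto
          qed
        qed
      qed
      thus ?thesis unfolding threshold_def by blast
    qed
  qed
qed

lemma core:
  assumes sg: "simple_graph V E" and acG: "ac4free V E" and acF: "ac4free V (E-F)"
    and eF: "e\<in>F" and ead: "e = {a,d}"
    and V: "a\<in>V" "b\<in>V" "c\<in>V" "d\<in>V" and dist: "distinct [a,b,c,d]"
    and ab: "{a,b}\<in>E" and cd: "{c,d}\<in>E" and bc: "{b,c}\<notin>E"
    and mu: "\<forall>w. w\<in>\<Union>F \<longrightarrow> degree E a \<le> degree E w"
    and mv: "\<forall>w. {a,w}\<in>F \<longrightarrow> degree E d \<le> degree E w"
  shows False
proof -
  have or: "{a,b}\<in>F \<or> {c,d}\<in>F"
  proof (rule ccontr)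
    assume "\<not> ?thesis"
    then have "{a,b}\<in>E-F" "{c,d}\<in>E-F" using ab cd by auto
    then have "{a,d}\<in>E-F \<or> {b,c}\<in>E-F" using acF V dist unfolding ac4free_def by blast
    then show False using eF ead bc by auto
  qed
  have 1: "degree E c < degree E a"
    by (rule deg_less[OF sg acG, of a b c]) (use ab bc dist V in \<open>auto simp: insert_commute\<close>)
  have 2: "degree E b < degree E d"
    by (rule deg_less[OF sg acG, of d c b]) (use cd bc dist V in \<open>auto simp: insert_commute\<close>)
  from or show False
  proof
    assume "{a,b}\<in>F" then show False using mv 2 by fastforce
  next
    assume "{c,d}\<in>F" then have "c \<in> \<Union>F" by blast
    then show False using mu 1 by fastforce
  qed
qed

theorem theorem4p5:
  fixes V :: "'a set" and E F :: "'a set set" and e :: "'a set"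
  assumes "simple_graph V E"
    and "threshold V E"
    and "F \<subseteq> E"
    and "threshold V (E - F)"
    and "degree_minimal E F e"
  shows "threshold V (E - {e})"
proof -
  have sg: "simple_graph V E" by fact
  have nl: "\<forall>x. {x}\<notin>E" using assms(1) unfolding simple_graph_def by force
  have acG: "ac4free V E" using thr_ac4 assms(2) nl by blast
  have acF: "ac4free V (E-F)" using thr_ac4 assms(4) nl by blast
  have eF: "e\<in>F" using assms(5) unfolding degree_minimal_def by blast
  obtain u v where uv: "e = {u,v}" and mu: "\<forall>w. w\<in>\<Union>F \<longrightarrow> degree E u \<le> degree E w"
    and mv: "\<forall>w. {u,w}\<in>F \<longrightarrow> degree E v \<le> degree E w"
    using assms(5) unfolding degree_minimal_def by blast
  have "ac4free V (E-{e})"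
    unfolding ac4free_def
  proof (intro ballI impI)
    fix a b c d assume V: "a\<in>V" "b\<in>V" "c\<in>V" "d\<in>V" and dist: "distinct [a,b,c,d]"
      and ab: "{a,b}\<in>E-{e}" and cd: "{c,d}\<in>E-{e}"
    show "{a,d}\<in>E-{e} \<or> {b,c}\<in>E-{e}"
    proof (rule ccontr)
      assume h: "\<not> ?thesis"
      have "{a,d}\<in>E \<or> {b,c}\<in>E" using acG V dist ab cd unfolding ac4free_def by blast
      then show False
      proof
        assume adE: "{a,d}\<in>E"
        then have ead: "e = {a,d}" using h by blast
        have bc: "{b,c}\<notin>E" using h ead dist by (auto simp: doubleton_eq_iff)
        have "(u = a \<and> v = d) \<or> (u = d \<and> v = a)" using uv ead by (auto simp: doubleton_eq_iff)
        then show False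
        proof
          assume "u = a \<and> v = d"
          then show False using core[OF sg acG acF eF ead V dist _ _ bc] ab cd mu mv by auto
        next
          assume uv': "u = d \<and> v = a"
          have e': "e = {d,a}" using ead by (metis insert_commute)
          have dc: "{d,c}\<in>E" using cd by (metis insert_commute Diff_iff)
          have ba: "{b,a}\<in>E" using ab by (metis insert_commute Diff_iff)
          have cb: "{c,b}\<notin>E" using bc by (metis insert_commute)
          have d': "distinct [d,c,b,a]" using dist by auto
          show False using core[OF sg acG acF eF e' V(4) V(3) V(2) V(1) d' dc ba cb] uv' mu mv by auto
        qed
      next
        assume bcE: "{b,c}\<in>E"
        then have ebc: "e = {b,c}" using h by blast
        have ad: "{a,d}\<notin>E" using h ebc dist by (auto simp: doubleton_eq_iff)
        have ba: "{b,a}\<in>E" using ab by (metis insert_commute Diff_iff)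
        have dc: "{d,c}\<in>E" using cd by (metis insert_commute Diff_iff)
        have da: "{d,a}\<notin>E" using ad by (metis insert_commute)
        have "(u = b \<and> v = c) \<or> (u = c \<and> v = b)" using uv ebc by (auto simp: doubleton_eq_iff)
        then show False
        proof
          assume uv': "u = b \<and> v = c"
          have d': "distinct [b,a,d,c]" using dist by auto
          show False using core[OF sg acG acF eF ebc V(2) V(1) V(4) V(3) d' ba dc ad] uv' mu mv by auto
        next
          assume uv': "u = c \<and> v = b"
          have e': "e = {c,b}" using ebc by (metis insert_commute)
          have cd': "{c,d}\<in>E" using cd by blast
          have ab': "{a,b}\<in>E" using ab by blast
          have d': "distinct [c,d,a,b]" using dist by auto
          show False using core[OF sg acG acF eF e' V(3) V(4) V(1) V(2) d' cd' ab' da] uv' mu mv by auto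
        qed
      qed
    qed
  qed
  moreover have "finite V" using sg unfolding simple_graph_def by blast
  moreover have "\<forall>x. {x}\<notin>E-{e}" using nl by blast
  ultimately show ?thesis by (rule ac4_thr[rotated 2])
qed

end
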